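(* Let $E^*=\{\alpha\in\mathbb{Z}[\gamma]:\alpha>0\}$. The sets $$E^{(+)}=\{m+n\gamma^{-1}:\ m,n\in\mathbb{Z},\ m,n\ge1\},\qquad E^{(i)}=\{m\gamma^{-i}+n\gamma^{-i-2}:\ m,n\in\mathbb{Z},\ m\ge1,\ n\ge0\}\quad(i\in\mathbb{N})$$ are pairwise disjoint and their union is $E^*$.
   Context: $\gamma=(1+\sqrt5)/2$ and $\mathbb{Z}[\gamma]=\mathbb{Z}\oplus\mathbb{Z}\gamma^{-1}\subset\mathbb{R}$. *)

theory Defs
  imports Complex_Main
begin

definition gamma :: real where
  "gamma = (1 + sqrt 5) / 2"

definition Zgamma :: "real set" where
  "Zgamma = {of_int m + of_int n * inverse gamma | m n :: int. True}"

definition Estar :: "real set" where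
  "Estar = {\<alpha> \<in> Zgamma. \<alpha> > 0}"

definition Eplus :: "real set" where
  "Eplus = {of_int m + of_int n * inverse gamma | m n :: int. m \<ge> 1 \<and> n \<ge> 1}"

definition Ei :: "nat \<Rightarrow> real set" where
  "Ei i = {of_int m * inverse gamma ^ i + of_int n * inverse gamma ^ (i + 2)
           | m n :: int. m \<ge> 1 \<and> n \<ge> 0}"

end

theory Submission
  imports Defs
begin

definition ph :: real where "ph = inverse gamma"

lemma ph_eq: "ph = (sqrt 5 - 1) / 2"
proof -
  have s: "sqrt 5 * sqrt 5 = 5" by simp
  have p: "sqrt 5 > 0" by simp
  have m: "(1 + sqrt 5) * (sqrt 5 - 1) = 4" using s by (simp add: algebra_simps)
  have "ph = 2 / (1 + sqrt 5)" unfolding ph_def gamma_def by simp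
  also have "\<dots> = (sqrt 5 - 1) / 2"
  proof -
    have q: "1 + sqrt 5 \<noteq> 0" using p by linarith
    have "(2::real) * 2 = (sqrt 5 - 1) * (1 + sqrt 5)" using m by (simp add: mult.commute)
    then show ?thesis using frac_eq_eq[OF q, of 2 2 "sqrt 5 - 1"] by simp
  qed
  finally show ?thesis .
qed

lemma ph_sq: "ph * ph = 1 - ph"
proof -
  have s: "sqrt 5 * sqrt 5 = 5" by simp
  show ?thesis unfolding ph_eq by (simp add: field_simps s)
qed

lemma ph_pos: "0 < ph" and ph_lt1: "ph < 1"
proof -
  have "sqrt 5 > 1" by simp
  moreover have "sqrt 5 < 3"
    by (rule real_less_lsqrt) auto
  ultimately show "0 < ph" "ph < 1" unfolding ph_eq by auto
qed

lemma no_sol: "(a::int)^2 - a*b - b^2 = 0 \<Longrightarrow> b = 0"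
proof (induction "nat \<bar>b\<bar>" arbitrary: a b rule: less_induct)
  case less
  show ?case
  proof (rule ccontr)
    assume b0: "b \<noteq> 0"
    have "even b"
    proof (rule ccontr)
      assume "odd b"
      have "even (a * (a - b))" using \<open>odd b\<close> by auto
      moreover have "a^2 - a*b - b^2 = a*(a-b) - b^2" by (simp add: algebra_simps power2_eq_square)
      ultimately have "odd (a^2 - a*b - b^2)" using \<open>odd b\<close> by auto
      with less.prems show False by simp
    qed
    then obtain b' where b': "b = 2*b'" by blast
    have "a^2 = b*(a+b)" using less.prems by (simp add: algebra_simps power2_eq_square)
    hence "even (a^2)" using b' by simp
    hence "even a" by simp
    then obtain a' where a': "a = 2*a'" by blast
    have "4*(a'^2 - a'*b' - b'^2) = 0" using less.prems a' b'
      by (simp add: algebra_simps power2_eq_square)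
    hence e: "a'^2 - a'*b' - b'^2 = 0" by simp
    have "nat \<bar>b'\<bar> < nat \<bar>b\<bar>" using b' b0 by auto
    from less.hyps[OF this e] have "b' = 0" .
    with b' b0 show False by simp
  qed
qed

definition v :: "int \<times> int \<Rightarrow> real" where "v p = of_int (fst p) + of_int (snd p) * ph"

lemma v_zero: "of_int x + of_int y * ph = 0 \<Longrightarrow> x = 0 \<and> y = 0"
proof -
  assume h: "of_int x + of_int y * ph = 0"
  have "y = 0"
  proof (rule ccontr)
    assume y0: "y \<noteq> 0"
    have p: "ph = - of_int x / of_int y" using h y0 by (simp add: field_simps)
    have "ph * ph + ph - 1 = 0" using ph_sq by simp
    hence "(of_int x)^2 - of_int x * of_int y - (of_int y)^2 = (0::real)"
      using y0 unfolding p by (simp add: field_simps power2_eq_square)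
    hence "x^2 - x*y - y^2 = 0" by (metis of_int_eq_0_iff of_int_diff of_int_mult of_int_power)
    then show False using no_sol y0 by blast
  qed
  with h show ?thesis by simp
qed

lemma v_inj: "v p = v q \<Longrightarrow> p = q"
proof -
  assume "v p = v q"
  hence "of_int (fst p - fst q) + of_int (snd p - snd q) * ph = 0"
    unfolding v_def by (simp add: algebra_simps)
  from v_zero[OF this] show "p = q" by (simp add: prod_eq_iff)
qed

fun T :: "int \<times> int \<Rightarrow> int \<times> int" where "T (a, b) = (b, a - b)"

lemma v_T: "v (T p) = ph * v p"
proof (cases p)
  case (Pair a b)
  have "ph * v p = of_int a * ph + of_int b * (ph * ph)" using Pair by (simp add: v_def algebra_simps)
  also have "\<dots> = v (T p)" using Pair by (simp add: ph_sq v_def algebra_simps)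
  finally show ?thesis by simp
qed

lemma v_Tn: "v ((T^^i) p) = ph^i * v p"
  by (induction i) (simp_all add: v_T)

lemma T_inj: "inj T"
  by (rule injI) (auto simp: prod_eq_iff elim: T.elims)

lemma Tn_inj: "inj (T^^i)"
proof (induction i)
  case 0 then show ?case by simp
next
  case (Suc i)
  have "T^^Suc i = (T^^i) \<circ> T" by (rule funpow_Suc_right)
  then show ?case using Suc T_inj inj_compose by metis
qed

definition E0P :: "(int \<times> int) set" where "E0P = {(a,b). b \<le> 0 \<and> a + b \<ge> 1}"
definition R :: "(int \<times> int) set" where
  "R = {(a,b). a \<le> 0 \<and> b \<ge> 1} \<union> {(a,b). a \<ge> 1 \<and> b \<le> 0 \<and> a + b \<le> 0}"

lemma Tn_R: "p \<in> E0P \<Longrightarrow> i \<ge> 1 \<Longrightarrow> (T^^i) p \<in> R"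
proof (induction i)
  case 0 then show ?case by simp
next
  case (Suc i)
  show ?case
  proof (cases "i = 0")
    case True
    with Suc.prems show ?thesis by (cases p) (auto simp: E0P_def R_def)
  next
    case False
    hence "(T^^i) p \<in> R" using Suc by simp
    then show ?thesis by (cases "(T^^i) p") (auto simp: R_def)
  qed
qed

lemma E0P_R: "E0P \<inter> R = {}" by (auto simp: E0P_def R_def)

lemma Ei_char: "Ei i = {v ((T^^i) p) | p. p \<in> E0P}"
proof -
  have "inverse gamma ^ i = ph ^ i" by (simp add: ph_def)
  have eq: "of_int m * inverse gamma ^ i + of_int n * inverse gamma ^ (i + 2)
            = v ((T^^i) (m+n, -n))" for m n :: int
  proof -
    have e2: "ph^(i+2) = ph^i * (1 - ph)" by (simp add: power_add power2_eq_square ph_sq)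
    have "of_int m * inverse gamma ^ i + of_int n * inverse gamma ^ (i + 2)
        = ph^i * v (m+n, -n)" unfolding ph_def[symmetric] e2 by (simp add: v_def algebra_simps)
    also have "\<dots> = v ((T^^i) (m+n, -n))" by (rule v_Tn[symmetric])
    finally show ?thesis .
  qed
  show ?thesis
  proof (rule set_eqI, rule iffI)
    fix x assume "x \<in> Ei i"
    then obtain m n :: int where "m \<ge> 1" "n \<ge> 0"
      "x = of_int m * inverse gamma ^ i + of_int n * inverse gamma ^ (i + 2)"
      unfolding Ei_def by blast
    then have "x = v ((T^^i) (m+n,-n))" "(m+n,-n) \<in> E0P" using eq by (auto simp: E0P_def)
    then show "x \<in> {v ((T^^i) p) | p. p \<in> E0P}" by blast
  next
    fix x assume "x \<in> {v ((T^^i) p) | p. p \<in> E0P}"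
    then obtain a b where ab: "b \<le> 0" "a + b \<ge> 1" "x = v ((T^^i) (a,b))"
      by (auto simp: E0P_def)
    have "x = of_int (a+b) * inverse gamma ^ i + of_int (-b) * inverse gamma ^ (i + 2)"
      using eq[of "a+b" "-b"] ab by simp
    moreover have "a + b \<ge> 1" "-b \<ge> 0" using ab by auto
    ultimately show "x \<in> Ei i" unfolding Ei_def by blast
  qed
qed

lemma Eplus_char: "Eplus = {v (a,b) | a b. a \<ge> 1 \<and> b \<ge> 1}"
  unfolding Eplus_def v_def ph_def by auto

lemma Zgamma_char: "Zgamma = range v"
proof (rule set_eqI, rule iffI)
  fix x assume "x \<in> Zgamma"
  then obtain m n :: int where "x = of_int m + of_int n * inverse gamma" unfolding Zgamma_def by blast
  then have "x = v (m,n)" by (simp add: v_def ph_def)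
  then show "x \<in> range v" by blast
next
  fix x assume "x \<in> range v"
  then obtain p where "x = v p" by blast
  then have "x = of_int (fst p) + of_int (snd p) * inverse gamma" by (simp add: v_def ph_def)
  then show "x \<in> Zgamma" unfolding Zgamma_def by blast
qed

lemma cover: "v (a,b) > 0 \<Longrightarrow> (a \<ge> 1 \<and> b \<ge> 1) \<or> (\<exists>i p. p \<in> E0P \<and> (T^^i) p = (a,b))"
proof (induction "nat (\<bar>a\<bar> + \<bar>b\<bar>)" arbitrary: a b rule: less_induct)
  case less
  have pos: "of_int a + of_int b * ph > 0" using less.prems by (simp add: v_def)
  show ?case
  proof (cases "a \<ge> 1 \<and> b \<ge> 1")
    case True then show ?thesis by blast
  next
    case nE: False
    show ?thesis
    proof (cases "(a,b) \<in> E0P")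
      case True
      then show ?thesis by (intro disjI2 exI[of _ 0]) auto
    next
      case nE0: False
      have Tb: "T (a+b, a) = (a, b)" by simp
      have vb: "v (a+b, a) > 0"
      proof -
        have "ph * v (a+b, a) = v (a,b)" using v_T[of "(a+b,a)"] by simp
        then have "0 < ph * v (a+b, a)" using less.prems by simp
        then show ?thesis using ph_pos by (simp add: zero_less_mult_iff)
      qed
      have step: "\<exists>i p. p \<in> E0P \<and> (T^^i) p = (a,b)"
        if "\<exists>i p. p \<in> E0P \<and> (T^^i) p = (a+b,a)"
      proof -
        from that obtain i p where "p \<in> E0P" "(T^^i) p = (a+b,a)" by blast
        then show ?thesis by (intro exI[of _ "Suc i"] exI[of _ p]) simp
      qed
      consider "b \<le> 0" "a + b \<le> 0" | "a \<le> 0" "b \<ge> 1"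
      proof -
        have "(b \<le> 0 \<and> a+b \<le> 0) \<or> (a \<le> 0 \<and> b \<ge> 1)" using nE nE0 by (auto simp: E0P_def)
        then show thesis using that by blast
      qed
      then show ?thesis
      proof cases
        case 1
        have "a \<ge> 1"
        proof (rule ccontr)
          assume "\<not> a \<ge> 1"
          hence "of_int a \<le> (0::real)" by simp
          moreover have "of_int b * ph \<le> 0" using 1 ph_pos by (simp add: mult_nonpos_nonneg)
          ultimately show False using pos by linarith
        qed
        hence "nat (\<bar>a+b\<bar> + \<bar>a\<bar>) < nat (\<bar>a\<bar> + \<bar>b\<bar>)" using 1 by auto
        from less.hyps[OF this vb] have "\<exists>i p. p \<in> E0P \<and> (T^^i) p = (a+b,a)"
          using 1 by auto
        then show ?thesis using step by blast
      next
        case 2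
        show ?thesis
        proof (cases "a = 0")
          case True
          have "(b, 0) \<in> E0P" using 2 by (simp add: E0P_def)
          moreover have "(T^^1) (b,0) = (a,b)" using True by simp
          ultimately show ?thesis by blast
        next
          case False
          have "of_int b * ph < of_int b" using 2 ph_lt1 by simp
          hence "a + b > 0" using pos by linarith
          hence "nat (\<bar>a+b\<bar> + \<bar>a\<bar>) < nat (\<bar>a\<bar> + \<bar>b\<bar>)" using 2 False by auto
          from less.hyps[OF this vb] have "\<exists>i p. p \<in> E0P \<and> (T^^i) p = (a+b,a)"
            using 2 False by auto
          then show ?thesis using step by blast
        qed
      qed
    qed
  qed
qed

theorem mainTheorem12:
  shows "(\<forall>i. Eplus \<inter> Ei i = {})
       \<and> (\<forall>i j. i \<noteq> j \<longrightarrow> Ei i \<inter> Ei j = {})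
       \<and> Eplus \<union> (\<Union>i. Ei i) = Estar"
proof (intro conjI allI impI)
  fix i
  show "Eplus \<inter> Ei i = {}"
  proof (rule ccontr)
    assume "Eplus \<inter> Ei i \<noteq> {}"
    then obtain x where x: "x \<in> Eplus" "x \<in> Ei i" by blast
    from x(1) obtain a b where ab0: "a \<ge> 1" "b \<ge> 1" "x = v (a,b)" unfolding Eplus_char by blast
    from x(2) obtain p where p0: "p \<in> E0P" "x = v ((T^^i) p)" unfolding Ei_char by blast
    have ab: "a \<ge> 1" "b \<ge> 1" "p \<in> E0P" "v (a,b) = v ((T^^i) p)" using ab0 p0 by auto
    hence eq: "(T^^i) p = (a,b)" by (metis v_inj)
    show False
    proof (cases "i = 0")
      case True then show ?thesis using eq ab by (auto simp: E0P_def)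
    next
      case False
      then have "(T^^i) p \<in> R" using Tn_R ab by simp
      then show ?thesis using eq ab by (auto simp: R_def)
    qed
  qed
next
  have key: "Ei i \<inter> Ei j = {}" if "i < j" for i j
  proof (rule ccontr)
    assume "Ei i \<inter> Ei j \<noteq> {}"
    then obtain x where x: "x \<in> Ei i" "x \<in> Ei j" by blast
    from x(1) obtain p where p0: "p \<in> E0P" "x = v ((T^^i) p)" unfolding Ei_char by blast
    from x(2) obtain q where q0: "q \<in> E0P" "x = v ((T^^j) q)" unfolding Ei_char by blast
    have pq: "p \<in> E0P" "q \<in> E0P" "v ((T^^i) p) = v ((T^^j) q)" using p0 q0 by auto
    have c: "(T^^(i + (j-i))) q = (T^^i) ((T^^(j-i)) q)" by (simp add: funpow_add)
    have jj: "i + (j - i) = j" using that by simp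
    have "(T^^i) p = (T^^j) q" using pq(3) by (rule v_inj)
    hence "(T^^i) p = (T^^i) ((T^^(j-i)) q)" using c jj by simp
    hence "p = (T^^(j-i)) q" using Tn_inj[of i] by (simp add: inj_eq)
    moreover have "(T^^(j-i)) q \<in> R" using Tn_R pq that by simp
    ultimately show False using pq E0P_R by blast
  qed
  fix i j :: nat assume "i \<noteq> j"
  then show "Ei i \<inter> Ei j = {}" using key[of i j] key[of j i] by (cases "i < j") auto
next
  show "Eplus \<union> (\<Union>i. Ei i) = Estar"
  proof (rule set_eqI, rule iffI)
    fix x assume "x \<in> Eplus \<union> (\<Union>i. Ei i)"
    then show "x \<in> Estar"
    proof
      assume "x \<in> Eplus"
      then obtain a b where "a \<ge> 1" "b \<ge> 1" "x = v (a,b)" unfolding Eplus_char by blast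
      moreover have "of_int b * ph > 0" using \<open>b \<ge> 1\<close> ph_pos by simp
      ultimately have "x > 0" by (simp add: v_def)
      moreover have "x \<in> range v" using \<open>x = v (a,b)\<close> by blast
      ultimately show ?thesis unfolding Estar_def Zgamma_char by blast
    next
      assume "x \<in> (\<Union>i. Ei i)"
      then obtain i where "x \<in> Ei i" by blast
      then obtain p where p: "p \<in> E0P" "x = v ((T^^i) p)" unfolding Ei_char by blast
      obtain a b where pab: "p = (a,b)" by (cases p)
      have ab: "b \<le> 0" "a + b \<ge> 1" "x = v ((T^^i) (a,b))" using p pab by (auto simp: E0P_def)
      have "of_int b * (1 - ph) \<le> 0" using ab ph_lt1 by (intro mult_nonpos_nonneg) auto
      hence "of_int b * ph \<ge> of_int b" by (simp add: algebra_simps)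
      hence "v (a,b) > 0" using ab by (simp add: v_def)
      hence "x > 0" using ab ph_pos by (simp add: v_Tn)
      moreover have "x \<in> range v" using ab by blast
      ultimately show ?thesis unfolding Estar_def Zgamma_char by blast
    qed
  next
    fix x assume "x \<in> Estar"
    then have "x \<in> range v" "x > 0" unfolding Estar_def Zgamma_char by auto
    then obtain p where "x = v p" by blast
    obtain a b where "p = (a,b)" by (cases p)
    have x: "x = v (a,b)" "v (a,b) > 0" using \<open>x = v p\<close> \<open>p = (a,b)\<close> \<open>x > 0\<close> by auto
    from cover[OF x(2)] show "x \<in> Eplus \<union> (\<Union>i. Ei i)"
    proof
      assume "a \<ge> 1 \<and> b \<ge> 1" then show ?thesis unfolding Eplus_char x by blast
    next
      assume "\<exists>i p. p \<in> E0P \<and> (T^^i) p = (a,b)"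
      then obtain i p where "p \<in> E0P" "(T^^i) p = (a,b)" by blast
      then have "x = v ((T^^i) p)" using x by simp
      then have "x \<in> Ei i" unfolding Ei_char using \<open>p \<in> E0P\<close> by blast
      then show ?thesis by blast
    qed
  qed
qed

end
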